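(* If $f:\mathbb{R}^{N}\rightarrow [0,\infty ]$ and $\hat{f}=0$, then either $f=0$ or there are $x_{0}\in \mathbb{R}^{N}$ and $0<z\leq \infty$ such that $f(x_0)=z$ and $f(x)=0$ for all $x\neq x_{0}$.
   Context: Enclosing balls: for nonempty bounded $X\subset\mathbb{R}^N$, $\overline{B}_X$ is the unique closed ball of minimal diameter containing $X$; $\overline{B}_X:=\mathbb{R}^N$ if $X$ unbounded; $\overline{B}_\emptyset:=\{0\}$. For $f:\mathbb{R}^N\to[-\infty,\infty]$ and $\xi\in[-\infty,\infty]$, $\rho^+_f(\xi)\in[0,\infty]$ is the radius of $\overline{B}_{\{f>\xi\}}$, $\gamma^+_f(t):=\inf\{\xi:\rho^+_f(\xi)\le t\}$ for $t\in[0,\infty)$, and $\hat f(x):=\gamma^+_f(|x|)$. *)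

theory Defs
  imports "HOL-Analysis.Analysis" "HOL-Library.Extended_Real"
begin

definition enc_radius :: "'a::euclidean_space set \<Rightarrow> ereal" where
  "enc_radius X =
     (if X = {} then 0
      else if \<not> bounded X then \<infinity>
      else ereal (Inf {r. \<exists>c. X \<subseteq> cball c r}))"

definition rho_plus :: "('a::euclidean_space \<Rightarrow> ereal) \<Rightarrow> ereal \<Rightarrow> ereal" where
  "rho_plus f \<xi> = enc_radius {x. f x > \<xi>}"

definition gamma_plus :: "('a::euclidean_space \<Rightarrow> ereal) \<Rightarrow> real \<Rightarrow> ereal" where
  "gamma_plus f t = Inf {\<xi>. rho_plus f \<xi> \<le> ereal t}"

definition fhat :: "('a::euclidean_space \<Rightarrow> ereal) \<Rightarrow> 'a \<Rightarrow> ereal" where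
  "fhat f x = gamma_plus f (norm x)"

end

theory Submission
  imports Defs
begin

lemma encA:
  fixes X :: "'a::euclidean_space set"
  assumes r: "enc_radius X \<le> 0" and a: "a \<in> X" and b: "b \<in> X"
  shows "a = b"
proof -
  have ne: "X \<noteq> {}" using a by auto
  have bd: "bounded X"
  proof (rule ccontr)
    assume "\<not> bounded X" then have "enc_radius X = \<infinity>" using ne by (simp add: enc_radius_def)
    with r show False by simp
  qed
  define S where "S = {r. \<exists>c. X \<subseteq> cball c r}"
  have "ereal (Inf S) \<le> 0" using r ne bd by (simp add: enc_radius_def S_def)
  hence le: "Inf S \<le> 0" by simp
  obtain c r0 where "X \<subseteq> cball c r0" using bd bounded_subset_cball by blast
  hence Sne: "S \<noteq> {}" unfolding S_def by blast
  have "dist a b / 2 \<le> Inf S"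
  proof (rule cInf_greatest[OF Sne])
    fix r assume "r \<in> S"
    then obtain c where "X \<subseteq> cball c r" unfolding S_def by blast
    hence "dist c a \<le> r" "dist c b \<le> r" using a b by auto
    moreover have "dist a b \<le> dist c a + dist c b" by (metis dist_commute dist_triangle)
    ultimately show "dist a b / 2 \<le> r" by linarith
  qed
  with le have "dist a b \<le> 0" by linarith
  thus ?thesis by simp
qed

lemma pos_real_below: "(0::ereal) < y \<Longrightarrow> \<exists>p::real. 0 < p \<and> ereal p < y"
  by (metis ereal_dense2 less_ereal.simps(1) zero_ereal_def)

theorem lemma12:
  fixes f :: "'a::euclidean_space \<Rightarrow> ereal"
  assumes nonneg: "\<And>x. f x \<ge> 0"
    and hat0: "\<And>x. fhat f x = 0"
  shows "(\<forall>x. f x = 0) \<or>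
         (\<exists>x0 z. 0 < z \<and> f x0 = z \<and> (\<forall>x. x \<noteq> x0 \<longrightarrow> f x = 0))"
proof -
  have I: "Inf {\<xi>. rho_plus f \<xi> \<le> ereal 0} = 0"
    using hat0[of 0] by (simp add: fhat_def gamma_plus_def)
  have B: "a = b" if "0 < \<xi>" "ereal \<xi> < f a" "ereal \<xi> < f b" for \<xi> :: real and a b
  proof -
    have "Inf {\<xi>. rho_plus f \<xi> \<le> ereal 0} < ereal \<xi>" using I that(1) by simp
    then obtain \<xi>' where "rho_plus f \<xi>' \<le> 0" "\<xi>' < ereal \<xi>"
      by (auto simp: Inf_less_iff zero_ereal_def)
    moreover have "\<xi>' < f a" "\<xi>' < f b" using that calculation(2) by auto
    ultimately show ?thesis using encA[of "{x. f x > \<xi>'}" a b] by (auto simp: rho_plus_def)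
  qed
  have C: "a = b" if fa: "f a > 0" and fb: "f b > 0" for a b
  proof -
    obtain p where p: "0 < p" "ereal p < f a" using pos_real_below[OF fa] by blast
    obtain q where q: "0 < q" "ereal q < f b" using pos_real_below[OF fb] by blast
    have "ereal (min p q) < f a" "ereal (min p q) < f b" using p q
      by (auto intro: le_less_trans[of _ "ereal p"] le_less_trans[of _ "ereal q"])
    thus ?thesis using B[of "min p q"] p q by auto
  qed
  show ?thesis
  proof (cases "\<exists>x. f x > 0")
    case False then show ?thesis using nonneg by (metis order.not_eq_order_implies_strict)
  next
    case True
    then obtain x0 where "f x0 > 0" by blast
    moreover have "\<forall>x. x \<noteq> x0 \<longrightarrow> f x = 0"
      using C calculation nonneg by (metis order.not_eq_order_implies_strict)
    ultimately show ?thesis by blast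
  qed
qed

end
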